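(* In the setting below, for all $n\in\mathbb{N}_0$, $$d(t_{2n+2})\le\frac{e^{K(t_{2n+2}-t_{2n+1})}}{2-e^{K(t_{2n+2}-t_{2n+1})}}\,d(t_{2n+1}).$$
   Context: Setting: $N\ge2$; $\psi:\mathbb{R}^d\times\mathbb{R}^d\to\mathbb{R}$ positive, bounded, continuous, $K:=\|\psi\|_\infty$; $\{t_n\}_{n\in\mathbb{N}_0}$ increasing, nonnegative, $t_0=0$, $t_n\to\infty$; $\alpha(0)=1$, $\alpha=1$ on $(t_{2n},t_{2n+1})$, $\alpha=-1$ on $[t_{2n+1},t_{2n+2}]$; $\{x_i\}$ solves $x_i'(t)=\frac1{N-1}\sum_{j\ne i}\alpha(t)\psi(x_i(t),x_j(t))(x_j(t)-x_i(t))$, $t>0$, $x_i(0)=x_i^0\in\mathbb{R}^d$ (continuous, $C^1$ on each $(t_n,t_{n+1})$). $d(t):=\max_{i,j}|x_i(t)-x_j(t)|$. Standing assumptions: $t_{2n+2}-t_{2n+1}<\frac{\ln 2}{K}$ for all $n$; $\sum_{p\ge0}\ln\frac{e^{K(t_{2p+2}-t_{2p+1})}}{2-e^{K(t_{2p+2}-t_{2p+1})}}<\infty$; $\sum_{p\ge0}\ln\max\{1-e^{-K(t_{2p+1}-t_{2p})},1-\frac{\psi_0}{K}(1-e^{-K(t_{2p+1}-t_{2p})})\}=-\infty$, with $\psi_0=\min_{|y|,|z|\le M^0}\psi(y,z)$, $M^0=e^{K\sum_{p}(t_{2p+2}-t_{2p+1})}\max_i|x_i^0|$. *)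

theory Defs
  imports "HOL-Analysis.Analysis"
begin

definition alpha :: "(nat \<Rightarrow> real) \<Rightarrow> real \<Rightarrow> real" where
  "alpha t s = (if \<exists>n. t (2*n+1) \<le> s \<and> s \<le> t (2*n+2) then -1 else 1)"

definition diam :: "nat \<Rightarrow> (nat \<Rightarrow> real \<Rightarrow> 'a::real_normed_vector) \<Rightarrow> real \<Rightarrow> real" where
  "diam N x s = Max {norm (x i s - x j s) | i j. i < N \<and> j < N}"

definition supnorm :: "('a \<Rightarrow> 'a \<Rightarrow> real) \<Rightarrow> real" where
  "supnorm \<psi> = (SUP p. \<bar>\<psi> (fst p) (snd p)\<bar>)"

end

theory Submission
  imports Defs
begin

lemma growth:
  fixes F :: "'p \<Rightarrow> real \<Rightarrow> 'a::real_normed_vector"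
  assumes P: "finite P" "P \<noteq> {}" and ab: "a < b" and L: "L \<ge> 0"
    and cont: "\<And>p. p \<in> P \<Longrightarrow> continuous_on {a..b} (F p)"
    and der: "\<And>p r. p \<in> P \<Longrightarrow> a < r \<Longrightarrow> r < b \<Longrightarrow> (F p has_vector_derivative F' p r) (at r)"
    and bnd: "\<And>p r. p \<in> P \<Longrightarrow> a < r \<Longrightarrow> r < b \<Longrightarrow> norm (F' p r) \<le> L * Max ((\<lambda>q. norm (F q r)) ` P)"
  shows "Max ((\<lambda>q. norm (F q b)) ` P) \<le> exp (L*(b-a)) * Max ((\<lambda>q. norm (F q a)) ` P)"
proof -
  define D where "D r = Max ((\<lambda>q. norm (F q r)) ` P)" for r
  have Dge: "norm (F q r) \<le> D r" if "q \<in> P" for q r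
    unfolding D_def using P that by (intro Max_ge) auto
  have main: "D b < exp (L*(b-a)) * (D a + e)" if e: "e > 0" for e
  proof -
    define g where "g r = (D a + e) * exp (L*(r-a))" for r
    have gcont: "continuous_on A g" for A unfolding g_def by (intro continuous_intros)
    have gder: "(g has_vector_derivative (L * g r)) (at r)" for r
      unfolding g_def has_real_derivative_iff_has_vector_derivative[symmetric]
      by (auto intro!: derivative_eq_intros)
    define S where "S = (\<Union>p\<in>P. {r \<in> {a..b}. g r \<le> norm (F p r)})"
    have Sclosed: "closed S" unfolding S_def using P
      by (intro closed_UN ballI continuous_on_closed_Collect_le gcont continuous_intros cont) auto
    have Scomp: "compact S"
    proof -
      have "S = {a..b} \<inter> S" by (auto simp: S_def)
      then show ?thesis using compact_Int_closed[OF compact_Icc[of a b] Sclosed] by metis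
    qed
    have "S = {}"
    proof (rule ccontr)
      assume "S \<noteq> {}"
      from compact_attains_inf[OF Scomp this] obtain s where s: "s \<in> S" and smin: "\<And>y. y \<in> S \<Longrightarrow> s \<le> y" by blast
      from s obtain p where p: "p \<in> P" "s \<in> {a..b}" "g s \<le> norm (F p s)" unfolding S_def by blast
      have "s \<noteq> a"
      proof
        assume "s = a"
        with p have "D a + e \<le> norm (F p a)" by (simp add: g_def)
        with Dge[OF p(1), of a] e show False by simp
      qed
      with p have as: "a < s" by simp
      have lt: "D r < g r" if r: "a < r" "r < s" for r
      proof -
        have "r \<notin> S" using smin r by force
        then have "\<forall>q\<in>P. norm (F q r) < g r" using r p(2) unfolding S_def by force
        then show ?thesis unfolding D_def using P by simp
      qed
      have "norm (F p s - F p a) \<le> g s - g a"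
      proof (rule differentiable_bound_general[OF as, where f' = "F' p" and \<phi>' = "\<lambda>r. L * g r"])
        show "continuous_on {a..s} (F p)" by (rule continuous_on_subset[OF cont[OF p(1)]]) (use p(2) in auto)
        show "continuous_on {a..s} g" by (rule gcont)
        show "(F p has_vector_derivative F' p r) (at r)" if "a < r" "r < s" for r
          using der[OF p(1)] that p(2) by auto
        show "(g has_vector_derivative L * g r) (at r)" for r by (rule gder)
        show "norm (F' p r) \<le> L * g r" if "a < r" "r < s" for r
        proof -
          have "norm (F' p r) \<le> L * D r" using bnd[OF p(1)] that p(2) by (auto simp: D_def)
          also have "\<dots> \<le> L * g r" using lt[OF that] L by (intro mult_left_mono) auto
          finally show ?thesis .
        qed
      qed
      then have "norm (F p s) \<le> norm (F p a) + g s - g a" using norm_triangle_ineq2[of "F p s" "F p a"] by linarith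
      also have "\<dots> < g s" using Dge[OF p(1), of a] e by (simp add: g_def)
      finally show False using p by simp
    qed
    then have "\<forall>q\<in>P. norm (F q b) < g b" using ab unfolding S_def by force
    then have "D b < g b" unfolding D_def using P by simp
    then show ?thesis by (simp add: g_def mult.commute)
  qed
  have "D b \<le> exp (L*(b-a)) * D a"
  proof (rule field_le_epsilon)
    fix e :: real assume "e > 0"
    then have "D b < exp (L*(b-a)) * (D a + e / exp (L*(b-a)))" by (intro main) auto
    then show "D b \<le> exp (L*(b-a)) * D a + e" by (simp add: distrib_left)
  qed
  then show ?thesis by (simp add: D_def)
qed


theorem lemma3p12:
  fixes N :: nat and \<psi> :: "'a::euclidean_space \<Rightarrow> 'a \<Rightarrow> real"
    and t :: "nat \<Rightarrow> real" and x :: "nat \<Rightarrow> real \<Rightarrow> 'a"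
  assumes N2: "N \<ge> 2"
    and psi_pos: "\<And>y z. \<psi> y z > 0"
    and psi_bdd: "\<exists>B. \<forall>y z. \<bar>\<psi> y z\<bar> \<le> B"
    and psi_cont: "continuous_on UNIV (\<lambda>p. \<psi> (fst p) (snd p))"
    and t_mono: "strict_mono t" and t0: "t 0 = 0"
    and t_lim: "filterlim t at_top sequentially"
    and x_cont: "\<And>i. i < N \<Longrightarrow> continuous_on {0..} (x i)"
    and x_ode: "\<And>i n s. i < N \<Longrightarrow> t n < s \<Longrightarrow> s < t (Suc n) \<Longrightarrow>
        (x i has_vector_derivative
          ((1 / real (N - 1)) *\<^sub>R
            (\<Sum>j\<in>{..<N} - {i}. (alpha t s * \<psi> (x i s) (x j s)) *\<^sub>R (x j s - x i s))))
        (at s)"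
    and A1: "\<And>n. t (2*n+2) - t (2*n+1) < ln 2 / supnorm \<psi>"
    and A2: "summable (\<lambda>p. ln (exp (supnorm \<psi> * (t (2*p+2) - t (2*p+1)))
                 / (2 - exp (supnorm \<psi> * (t (2*p+2) - t (2*p+1))))))"
    and A3: "filterlim (\<lambda>m. \<Sum>p<m. ln (max (1 - exp (- supnorm \<psi> * (t (2*p+1) - t (2*p))))
               (1 - (Inf {\<psi> y z | y z. norm y \<le> exp (supnorm \<psi> * (\<Sum>q. t (2*q+2) - t (2*q+1)))
                                              * Max {norm (x i 0) | i. i < N}
                                   \<and> norm z \<le> exp (supnorm \<psi> * (\<Sum>q. t (2*q+2) - t (2*q+1)))
                                              * Max {norm (x i 0) | i. i < N}}
                     / supnorm \<psi>) * (1 - exp (- supnorm \<psi> * (t (2*p+1) - t (2*p)))))))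
             at_bot sequentially"
  shows "\<forall>n. diam N x (t (2*n+2))
          \<le> exp (supnorm \<psi> * (t (2*n+2) - t (2*n+1)))
             / (2 - exp (supnorm \<psi> * (t (2*n+2) - t (2*n+1)))) * diam N x (t (2*n+1))"
proof
  fix n
  define a where "a = t (2*n+1)"
  define b where "b = t (2*n+2)"
  define K where "K = supnorm \<psi>"
  define P where "P = {..<N} \<times> {..<N}"
  have ab: "a < b" unfolding a_def b_def using t_mono by (simp add: strict_mono_def)
  have tnn: "t k \<ge> 0" for k using t0 t_mono by (metis le0 strict_mono_less_eq)
  have a0: "a \<ge> 0" unfolding a_def by (rule tnn)
  from psi_bdd obtain B where B: "\<forall>y z. \<bar>\<psi> y z\<bar> \<le> B" by blast
  have psiK: "\<psi> y z \<le> K" for y z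
  proof -
    have "\<bar>\<psi> (fst (y,z)) (snd (y,z))\<bar> \<le> (SUP p. \<bar>\<psi> (fst p) (snd p)\<bar>)"
      by (rule cSUP_upper) (use B in \<open>auto intro!: bdd_aboveI2\<close>)
    then show ?thesis by (simp add: K_def supnorm_def)
  qed
  have Kpos: "K > 0" using psiK[of 0 0] psi_pos[of 0 0] by linarith
  have alpha_abs: "\<bar>alpha t s\<bar> = 1" for s by (simp add: alpha_def)
  have Pfin: "finite P" and Pne: "P \<noteq> {}" using N2 by (auto simp: P_def lessThan_empty_iff)
  have diam_eq: "diam N x s = Max ((\<lambda>q. norm (x (fst q) s - x (snd q) s)) ` P)" for s
  proof -
    have "{norm (x i s - x j s) | i j. i < N \<and> j < N} = (\<lambda>q. norm (x (fst q) s - x (snd q) s)) ` P"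
      by (auto simp: P_def image_def)
    then show ?thesis by (simp add: diam_def)
  qed
  define v where "v i s = (1 / real (N - 1)) *\<^sub>R
            (\<Sum>j\<in>{..<N} - {i}. (alpha t s * \<psi> (x i s) (x j s)) *\<^sub>R (x j s - x i s))" for i s
  have vbnd: "norm (v i s) \<le> K * Max ((\<lambda>q. norm (x (fst q) s - x (snd q) s)) ` P)" if i: "i < N" for i s
  proof -
    let ?D = "Max ((\<lambda>q. norm (x (fst q) s - x (snd q) s)) ` P)"
    have "norm (\<Sum>j\<in>{..<N} - {i}. (alpha t s * \<psi> (x i s) (x j s)) *\<^sub>R (x j s - x i s))
        \<le> (\<Sum>j\<in>{..<N} - {i}. norm ((alpha t s * \<psi> (x i s) (x j s)) *\<^sub>R (x j s - x i s)))"
      by (rule norm_sum)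
    also have "\<dots> \<le> (\<Sum>j\<in>{..<N} - {i}. K * ?D)"
    proof (rule sum_mono)
      fix j assume j: "j \<in> {..<N} - {i}"
      have "norm ((alpha t s * \<psi> (x i s) (x j s)) *\<^sub>R (x j s - x i s))
          = \<bar>\<psi> (x i s) (x j s)\<bar> * norm (x j s - x i s)" by (simp add: abs_mult alpha_abs)
      also have "\<dots> \<le> K * ?D"
      proof (rule mult_mono)
        show "\<bar>\<psi> (x i s) (x j s)\<bar> \<le> K" using psiK psi_pos by (simp add: less_imp_le)
        show "norm (x j s - x i s) \<le> ?D"
          using Pfin j i by (intro Max_ge) (auto simp: P_def image_def intro!: exI[of _ "(j,i)"])
      qed (use Kpos in auto)
      finally show "norm ((alpha t s * \<psi> (x i s) (x j s)) *\<^sub>R (x j s - x i s)) \<le> K * ?D" .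
    qed
    also have "\<dots> = real (N - 1) * (K * ?D)" using i by simp
    finally have "norm (\<Sum>j\<in>{..<N} - {i}. (alpha t s * \<psi> (x i s) (x j s)) *\<^sub>R (x j s - x i s))
        \<le> real (N - 1) * (K * ?D)" .
    moreover have "real (N - 1) > 0" using N2 by simp
    ultimately show ?thesis unfolding v_def by (simp add: field_simps)
  qed
  have grow: "Max ((\<lambda>q. norm (x (fst q) b - x (snd q) b)) ` P)
      \<le> exp ((2*K)*(b-a)) * Max ((\<lambda>q. norm (x (fst q) a - x (snd q) a)) ` P)"
  proof (rule growth[OF Pfin Pne ab, where F = "\<lambda>q s. x (fst q) s - x (snd q) s"
        and F' = "\<lambda>q s. v (fst q) s - v (snd q) s"])
    show "0 \<le> 2*K" using Kpos by simp
    show "continuous_on {a..b} (\<lambda>s. x (fst p) s - x (snd p) s)" if "p \<in> P" for p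
    proof -
      have "fst p < N" "snd p < N" using that by (auto simp: P_def)
      then have "continuous_on {a..b} (x (fst p))" "continuous_on {a..b} (x (snd p))"
        using a0 by (auto intro: continuous_on_subset[OF x_cont])
      then show ?thesis by (intro continuous_on_diff)
    qed
    show "((\<lambda>s. x (fst p) s - x (snd p) s) has_vector_derivative v (fst p) r - v (snd p) r) (at r)"
      if "p \<in> P" "a < r" "r < b" for p r
    proof -
      have "t (2*n+1) < r" "r < t (Suc (2*n+1))" using that by (auto simp: a_def b_def)
      then show ?thesis using that unfolding v_def P_def
        by (intro has_vector_derivative_diff x_ode) auto
    qed
    show "norm (v (fst p) r - v (snd p) r) \<le> 2 * K * Max ((\<lambda>q. norm (x (fst q) r - x (snd q) r)) ` P)"
      if "p \<in> P" "a < r" "r < b" for p r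
    proof -
      have "norm (v (fst p) r - v (snd p) r) \<le> norm (v (fst p) r) + norm (v (snd p) r)"
        by (rule norm_triangle_ineq4)
      also have "\<dots> \<le> K * Max ((\<lambda>q. norm (x (fst q) r - x (snd q) r)) ` P) + K * Max ((\<lambda>q. norm (x (fst q) r - x (snd q) r)) ` P)"
        using that by (intro add_mono vbnd) (auto simp: P_def)
      finally show ?thesis by simp
    qed
  qed
  define u where "u = K * (b - a)"
  have u0: "u \<ge> 0" using Kpos ab by (simp add: u_def)
  have "b - a < ln 2 / K" using A1[of n] by (simp add: a_def b_def K_def)
  then have "u < ln 2" using Kpos by (simp add: u_def field_simps)
  then have eu2: "exp u < 2" by (metis exp_less_cancel_iff exp_ln zero_less_numeral)
  have Da: "0 \<le> Max ((\<lambda>q. norm (x (fst q) a - x (snd q) a)) ` P)"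
    using Pfin Pne by (simp add: Max_ge_iff) (auto simp: P_def)
  have key: "exp (2*u) \<le> exp u / (2 - exp u)"
  proof -
    have "exp (2*u) = exp u * exp u" by (metis exp_add mult_2)
    moreover have "exp u * exp u * (2 - exp u) \<le> exp u"
    proof -
      have sq: "0 \<le> (exp u - 1) * (exp u - 1)" by simp
      have "exp u * (2 - exp u) = 1 - (exp u - 1) * (exp u - 1)" by (simp add: algebra_simps)
      then have "exp u * (2 - exp u) \<le> 1" using sq by linarith
      then have "exp u * (exp u * (2 - exp u)) \<le> exp u * 1"
        by (intro mult_left_mono) auto
      then show ?thesis by (simp add: mult.assoc)
    qed
    ultimately show ?thesis using eu2 by (simp add: field_simps)
  qed
  have "diam N x b \<le> exp (2*u) * diam N x a"
    using grow by (simp add: diam_eq u_def mult.assoc)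
  also have "\<dots> \<le> exp u / (2 - exp u) * diam N x a"
    using key Da by (intro mult_right_mono) (auto simp: diam_eq)
  finally show "diam N x (t (2*n+2))
          \<le> exp (supnorm \<psi> * (t (2*n+2) - t (2*n+1)))
             / (2 - exp (supnorm \<psi> * (t (2*n+2) - t (2*n+1)))) * diam N x (t (2*n+1))"
    by (simp add: a_def b_def u_def K_def)
qed

end
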